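(* Let $\epsilon, b, c \in \mathbb{C}$ with $\epsilon\neq 0$ and $1-\tfrac13\epsilon^2 b\neq 0$. Consider the map $\Phi:(x,y)\mapsto(\widetilde x,\widetilde y)$ of $\mathbb{C}^2$ defined implicitly by the system (linear in $(\widetilde x,\widetilde y)$, hence defining a birational map) \[ \frac{\widetilde x - x}{\epsilon}=x\widetilde y+\widetilde x y, \qquad \frac{\widetilde y-y}{\epsilon}= b+c(1-\epsilon^2b)(x+\widetilde x)+\big(1-\epsilon^2c^2(2-\epsilon^2b)\big)x \widetilde x -(2-\epsilon^2b)\,y \widetilde y . \] Set \[ p=\frac{(1-\epsilon^2 b)(1-\frac{1}{2}\epsilon^2 b)}{1-\frac{1}{3}\epsilon^2b},\qquad a_1=1-\epsilon^2b-\tfrac{4}{3}\epsilon^2c^2p,\qquad c_1=cp, \] \[ m_1=1+\epsilon y+\epsilon(1-\epsilon c)x,\quad m_2=1+\epsilon y-\epsilon(1+\epsilon c)x,\quad m_3=1-\epsilon y+\epsilon(1-\epsilon c)x,\quad m_4=1-\epsilon y-\epsilon(1+\epsilon c)x . \] Then $\Phi$ is integrable in the sense that the rational function \[ H(x,y;\epsilon)=\frac{x^2\big((1-\frac{1}{2}\epsilon^2b)y^2-\frac{1}{4}a_1x^2-\frac{2}{3}c_1x-\frac{1}{2}b\big)}{m_1(x,y)\,m_2(x,y)\,m_3(x,y)\,m_4(x,y)} \] satisfies $H(\widetilde x,\widetilde y;\epsilon)=H(x,y;\epsilon)$ for all $(x,y)$ at which $\Phi$ and both sides are defined.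
   Context: This map is a modification of the Kahan discretization of the planar system $\dot x=2xy$, $\dot y=b+2cx+x^2-2y^2$ (whose standard Kahan discretization is $(\widetilde x-x)/\epsilon=\widetilde x y+x\widetilde y$, $(\widetilde y-y)/\epsilon=b+c(x+\widetilde x)+x\widetilde x-2y\widetilde y$). An integral of motion of a map $\Phi$ is a (nonconstant) function $H$ with $H\circ\Phi=H$. *)

theory Defs
  imports Complex_Main
begin

definition phi_rel :: "complex \<Rightarrow> complex \<Rightarrow> complex \<Rightarrow> complex \<Rightarrow> complex \<Rightarrow> complex \<Rightarrow> complex \<Rightarrow> bool" where
  "phi_rel eps b c x y xt yt \<longleftrightarrow>
     (xt - x) / eps = x * yt + xt * y \<and>
     (yt - y) / eps = b + c * (1 - eps^2 * b) * (x + xt)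
        + (1 - eps^2 * c^2 * (2 - eps^2 * b)) * x * xt - (2 - eps^2 * b) * y * yt"

definition phi_defined :: "complex \<Rightarrow> complex \<Rightarrow> complex \<Rightarrow> complex \<Rightarrow> complex \<Rightarrow> bool" where
  "phi_defined eps b c x y \<longleftrightarrow> (\<exists>!q. phi_rel eps b c x y (fst q) (snd q))"

definition p_par :: "complex \<Rightarrow> complex \<Rightarrow> complex" where
  "p_par eps b = (1 - eps^2 * b) * (1 - eps^2 * b / 2) / (1 - eps^2 * b / 3)"

definition a1_par :: "complex \<Rightarrow> complex \<Rightarrow> complex \<Rightarrow> complex" where
  "a1_par eps b c = 1 - eps^2 * b - 4/3 * eps^2 * c^2 * p_par eps b"

definition c1_par :: "complex \<Rightarrow> complex \<Rightarrow> complex \<Rightarrow> complex" where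
  "c1_par eps b c = c * p_par eps b"

definition m1 :: "complex \<Rightarrow> complex \<Rightarrow> complex \<Rightarrow> complex \<Rightarrow> complex" where
  "m1 eps c x y = 1 + eps * y + eps * (1 - eps * c) * x"
definition m2 :: "complex \<Rightarrow> complex \<Rightarrow> complex \<Rightarrow> complex \<Rightarrow> complex" where
  "m2 eps c x y = 1 + eps * y - eps * (1 + eps * c) * x"
definition m3 :: "complex \<Rightarrow> complex \<Rightarrow> complex \<Rightarrow> complex \<Rightarrow> complex" where
  "m3 eps c x y = 1 - eps * y + eps * (1 - eps * c) * x"
definition m4 :: "complex \<Rightarrow> complex \<Rightarrow> complex \<Rightarrow> complex \<Rightarrow> complex" where
  "m4 eps c x y = 1 - eps * y - eps * (1 + eps * c) * x"

definition mprod :: "complex \<Rightarrow> complex \<Rightarrow> complex \<Rightarrow> complex \<Rightarrow> complex" where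
  "mprod eps c x y = m1 eps c x y * m2 eps c x y * m3 eps c x y * m4 eps c x y"

definition H :: "complex \<Rightarrow> complex \<Rightarrow> complex \<Rightarrow> complex \<Rightarrow> complex \<Rightarrow> complex" where
  "H eps b c x y =
     x^2 * ((1 - eps^2 * b / 2) * y^2 - a1_par eps b c * x^2 / 4 - 2/3 * c1_par eps b c * x - b / 2)
     / mprod eps c x y"

end

theory Submission
  imports Defs
begin

definition Mh :: "complex \<Rightarrow> complex \<Rightarrow> complex \<Rightarrow> complex \<Rightarrow> complex \<Rightarrow> complex" where "Mh e c u v w = (w + e*v + e*(1-e*c)*u)*(w + e*v - e*(1+e*c)*u)*(w - e*v + e*(1-e*c)*u)*(w - e*v - e*(1+e*c)*u)"
definition MM :: "complex \<Rightarrow> complex \<Rightarrow> complex \<Rightarrow> complex \<Rightarrow> complex" where "MM e c u v = (1 + e*v + e*(1-e*c)*u)*(1 + e*v - e*(1+e*c)*u)*(1 - e*v + e*(1-e*c)*u)*(1 - e*v - e*(1+e*c)*u)"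
definition NNh :: "complex \<Rightarrow> complex \<Rightarrow> complex \<Rightarrow> complex \<Rightarrow> complex \<Rightarrow> complex \<Rightarrow> complex" where "NNh e b c u v w = u^2*(2*(3-e^2*b)*(2-e^2*b)*v^2 - (1-e^2*b)*(3-e^2*b-2*e^2*c^2*(2-e^2*b))*u^2 - 4*c*(1-e^2*b)*(2-e^2*b)*u*w - 2*(3-e^2*b)*b*w^2)"
definition NN :: "complex \<Rightarrow> complex \<Rightarrow> complex \<Rightarrow> complex \<Rightarrow> complex \<Rightarrow> complex" where "NN e b c u v = u^2*(2*(3-e^2*b)*(2-e^2*b)*v^2 - (1-e^2*b)*(3-e^2*b-2*e^2*c^2*(2-e^2*b))*u^2 - 4*c*(1-e^2*b)*(2-e^2*b)*u - 2*(3-e^2*b)*b)"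

lemma main_id: fixes e b c x y :: complex
  defines "k \<equiv> 1-e^2*c^2*(2-e^2*b)"
  defines "a11 \<equiv> 1 - e*y" and "a12 \<equiv> -e*x" and "a21 \<equiv> -e*(c*(1-e^2*b)+k*x)" and "a22 \<equiv> 1+e*(2-e^2*b)*y"
  defines "r1 \<equiv> x" and "r2 \<equiv> y+e*b+e*c*(1-e^2*b)*x"
  shows "NNh e b c (r1*a22 - a12*r2) (a11*r2-a21*r1) (a11*a22-a12*a21) * MM e c x y = NN e b c x y * Mh e c (r1*a22 - a12*r2) (a11*r2-a21*r1) (a11*a22-a12*a21)"
  unfolding assms NNh_def Mh_def NN_def MM_def by algebra

lemma NNh_scale: "NNh e b c (d*u) (d*v) d = d^4 * NN e b c u v"
  unfolding NNh_def NN_def by algebra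

lemma Mh_scale: "Mh e c (d*u) (d*v) d = d^4 * MM e c u v"
  unfolding Mh_def MM_def by algebra

lemma mprod_MM: "mprod e c u v = MM e c u v"
  unfolding mprod_def MM_def m1_def m2_def m3_def m4_def by simp

lemma NN_num: fixes e b c p u v :: complex
  assumes "(1 - e^2*b/3) * p = (1 - e^2*b) * (1 - e^2*b/2)"
  shows "NN e b c u v = 12 * (1 - e^2*b/3) * (u^2 * ((1 - e^2 * b / 2) * v^2 - (1 - e^2 * b - 4/3 * e^2 * c^2 * p) * u^2 / 4 - 2/3 * (c * p) * u - b / 2))"
  using assms unfolding NN_def by algebra

lemma H_NN: fixes e b :: complex assumes "1 - e^2*b/3 \<noteq> 0"
  shows "H e b c u v = NN e b c u v / (12 * (1 - e^2*b/3) * MM e c u v)"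
proof -
  have pq: "(1 - e^2*b/3) * p_par e b = (1 - e^2*b) * (1 - e^2*b/2)"
    unfolding p_par_def using assms by simp
  have q: "12 * (1 - e^2*b/3) \<noteq> 0" using assms by (simp add: mult.commute)
  show ?thesis
    unfolding H_def NN_num[OF pq] mprod_MM a1_par_def c1_par_def
    by (rule mult_divide_mult_cancel_left[OF q, symmetric])
qed

lemma rel_lin: fixes e :: complex assumes "e \<noteq> 0"
  shows "phi_rel e b c x y u v \<longleftrightarrow>
    ((1 - e*y)*u + (-e*x)*v = x \<and>
     (-e*(c*(1-e^2*b)+(1-e^2*c^2*(2-e^2*b))*x))*u + (1+e*(2-e^2*b)*y)*v = y+e*b+e*c*(1-e^2*b)*x)"
  unfolding phi_rel_def using assms
  by (simp add: field_simps)

theorem theorem2: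
  fixes eps b c x y xt yt :: complex
  assumes "eps \<noteq> 0"
    and "1 - eps^2 * b / 3 \<noteq> 0"
    and "phi_defined eps b c x y"
    and "phi_rel eps b c x y xt yt"
    and "mprod eps c x y \<noteq> 0"
    and "mprod eps c xt yt \<noteq> 0"
  shows "H eps b c xt yt = H eps b c x y"
proof -
  define e where "e = eps"
  define k where "k = 1-e^2*c^2*(2-e^2*b)"
  define a11 where "a11 = 1 - e*y"
  define a12 where "a12 = -e*x"
  define a21 where "a21 = -e*(c*(1-e^2*b)+k*x)"
  define a22 where "a22 = 1+e*(2-e^2*b)*y"
  define r1 where "r1 = x"
  define r2 where "r2 = y+e*b+e*c*(1-e^2*b)*x"
  define D where "D = a11*a22-a12*a21"
  have e0: "e \<noteq> 0" using assms(1) e_def by simp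
  have lin: "\<And>u v. phi_rel eps b c x y u v \<longleftrightarrow> (a11*u + a12*v = r1 \<and> a21*u + a22*v = r2)"
    unfolding e_def a11_def a12_def a21_def a22_def r1_def r2_def k_def
    using rel_lin[OF assms(1)] by simp
  have s1: "a11*xt + a12*yt = r1" and s2: "a21*xt + a22*yt = r2" using lin assms(4) by auto
  have nz: "a11 \<noteq> 0 \<or> a12 \<noteq> 0"
  proof (rule ccontr)
    assume h: "\<not> (a11 \<noteq> 0 \<or> a12 \<noteq> 0)"
    then have "1 - e*y = 0" "x = 0" unfolding a11_def a12_def using e0 by auto
    then have "m3 eps c x y = 0" unfolding m3_def e_def by simp
    then show False using assms(5) unfolding mprod_def by simp
  qed
  have D0: "D \<noteq> 0"
  proof
    assume D: "D = 0"
    have "phi_rel eps b c x y (xt + a12) (yt - a11)"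
      unfolding lin using s1 s2 D unfolding D_def by (simp add: algebra_simps)
    moreover have "(xt + a12, yt - a11) \<noteq> (xt, yt)" using nz by auto
    ultimately show False using assms(3) assms(4) unfolding phi_defined_def
      by (metis fst_conv snd_conv)
  qed
  have X: "D*xt = r1*a22 - a12*r2"
  proof -
    have "D*xt = a22*(a11*xt + a12*yt) - a12*(a21*xt + a22*yt)" unfolding D_def by (simp add: algebra_simps)
    then show ?thesis using s1 s2 by (simp add: mult.commute)
  qed
  have Y: "D*yt = a11*r2-a21*r1"
  proof -
    have "D*yt = a11*(a21*xt + a22*yt) - a21*(a11*xt + a12*yt)" unfolding D_def by (simp add: algebra_simps)
    then show ?thesis using s1 s2 by (simp add: mult.commute)
  qed
  have id: "NNh e b c (D*xt) (D*yt) D * MM e c x y = NN e b c x y * Mh e c (D*xt) (D*yt) D"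
    unfolding X Y unfolding D_def a11_def a12_def a21_def a22_def r1_def r2_def k_def
    by (rule main_id)
  hence "D^4 * (NN e b c xt yt * MM e c x y) = D^4 * (NN e b c x y * MM e c xt yt)"
    unfolding NNh_scale Mh_scale by (simp add: algebra_simps)
  hence eq: "NN e b c xt yt * MM e c x y = NN e b c x y * MM e c xt yt" using D0 by simp
  have M1: "MM e c x y \<noteq> 0" and M2: "MM e c xt yt \<noteq> 0"
    using assms(5,6) mprod_MM e_def by auto
  define K where "K = 12 * (1 - e^2*b/3)"
  have K0: "K \<noteq> 0" using assms(2) unfolding K_def e_def by (simp add: mult.commute)
  have "NN e b c xt yt / (K * MM e c xt yt) = NN e b c x y / (K * MM e c x y)"
    using K0 M1 M2 eq by (simp add: frac_eq_eq mult.commute mult.left_commute)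
  then show ?thesis
    unfolding H_NN[OF assms(2)] K_def e_def by simp
qed

end
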